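(* Let $L$ be a multiplicative lattice. (1) If $\{p_\lambda\}_{\lambda\in\Lambda}$ is a family of prime elements of $L$, then $\bigwedge_{\lambda\in\Lambda}p_\lambda$ is a quasi $m$-absorbing element of $L$ for all $m\ge2$. (2) If $\{p_\lambda\}_{\lambda\in\Lambda}$ is a family of weakly prime elements of $L$, then $\bigwedge_{\lambda\in\Lambda}p_\lambda$ is a weakly quasi $m$-absorbing element of $L$ for all $m\ge2$.
   Context: A multiplicative lattice is a complete lattice $L$ with least element $0$ and compact greatest element $1$, equipped with a commutative, associative product that distributes over arbitrary joins and has $1$ as multiplicative identity. An element $a$ is compact if $a\le\bigvee_{\alpha\in I}a_\alpha$ implies $a\le\bigvee_{\alpha\in I_0}a_\alpha$ for some finite $I_0\subseteq I$; $L_*$ denotes the set of compact elements. A proper element $p$ ($p<1$) is prime (resp. weakly prime) if for $a,b\in L$, $ab\le p$ (resp. $0\ne ab\le p$) implies $a\le p$ or $b\le p$. A proper element $q$ is quasi $m$-absorbing if whenever $a^mb\le q$ for some $a,b\in L_*$, then $a^m\le q$ or $a^{m-1}b\le q$; it is weakly quasi $m$-absorbing if whenever $0\ne a^mb\le q$ for some $a,b\in L_*$, then $a^m\le q$ or $a^{m-1}b\le q$. *)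

theory Defs
  imports Main
begin

definition compact_el :: "'a::complete_lattice \<Rightarrow> bool" where
  "compact_el a \<longleftrightarrow> (\<forall>S. a \<le> Sup S \<longrightarrow> (\<exists>T. finite T \<and> T \<subseteq> S \<and> a \<le> Sup T))"

text \<open>Multiplicative lattice: complete lattice (0 = bot, 1 = top) with compact top and a
commutative, associative product distributing over arbitrary joins, with top as unit.\<close>
locale mult_lattice =
  fixes mult :: "'a::complete_lattice \<Rightarrow> 'a \<Rightarrow> 'a"
  assumes mult_comm: "mult a b = mult b a"
    and mult_assoc: "mult (mult a b) c = mult a (mult b c)"
    and mult_Sup_distrib: "mult a (Sup S) = Sup (mult a ` S)"
    and mult_top: "mult top a = a"
    and top_compact: "compact_el (top::'a)"

primrec mpow :: "('a::complete_lattice \<Rightarrow> 'a \<Rightarrow> 'a) \<Rightarrow> 'a \<Rightarrow> nat \<Rightarrow> 'a" where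
  "mpow mult a 0 = top"
| "mpow mult a (Suc n) = mult a (mpow mult a n)"

definition prime_el :: "('a::complete_lattice \<Rightarrow> 'a \<Rightarrow> 'a) \<Rightarrow> 'a \<Rightarrow> bool" where
  "prime_el mult p \<longleftrightarrow> p < top \<and>
     (\<forall>a b. mult a b \<le> p \<longrightarrow> a \<le> p \<or> b \<le> p)"

definition weakly_prime_el :: "('a::complete_lattice \<Rightarrow> 'a \<Rightarrow> 'a) \<Rightarrow> 'a \<Rightarrow> bool" where
  "weakly_prime_el mult p \<longleftrightarrow> p < top \<and>
     (\<forall>a b. mult a b \<noteq> bot \<longrightarrow> mult a b \<le> p \<longrightarrow> a \<le> p \<or> b \<le> p)"

definition quasi_m_absorbing :: "('a::complete_lattice \<Rightarrow> 'a \<Rightarrow> 'a) \<Rightarrow> nat \<Rightarrow> 'a \<Rightarrow> bool" where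
  "quasi_m_absorbing mult m q \<longleftrightarrow> q < top \<and>
     (\<forall>a b. compact_el a \<longrightarrow> compact_el b \<longrightarrow> mult (mpow mult a m) b \<le> q \<longrightarrow>
        mpow mult a m \<le> q \<or> mult (mpow mult a (m - 1)) b \<le> q)"

definition weakly_quasi_m_absorbing :: "('a::complete_lattice \<Rightarrow> 'a \<Rightarrow> 'a) \<Rightarrow> nat \<Rightarrow> 'a \<Rightarrow> bool" where
  "weakly_quasi_m_absorbing mult m q \<longleftrightarrow> q < top \<and>
     (\<forall>a b. compact_el a \<longrightarrow> compact_el b \<longrightarrow> mult (mpow mult a m) b \<noteq> bot \<longrightarrow>
        mult (mpow mult a m) b \<le> q \<longrightarrow>
        mpow mult a m \<le> q \<or> mult (mpow mult a (m - 1)) b \<le> q)"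

end

theory Submission
  imports Defs
begin

context mult_lattice begin

lemma mono_r: "x \<le> y \<Longrightarrow> mult a x \<le> mult a y"
proof -
  assume "x \<le> y"
  hence "Sup {x,y} = y" by (simp add: sup_absorb2)
  hence "mult a y = Sup (mult a ` {x,y})" using mult_Sup_distrib by metis
  thus ?thesis by (metis sup.cobounded1 image_insert image_empty Sup_insert Sup_empty sup_bot_right)
qed

lemma le_left: "mult a x \<le> a"
proof -
  have "mult a x \<le> mult a top" by (rule mono_r) simp
  also have "\<dots> = a" using mult_comm mult_top by metis
  finally show ?thesis .
qed

lemma key: "m \<ge> 2 \<Longrightarrow> mult (mpow mult a m) b = mult a (mult (mpow mult a (m-1)) b)
   \<and> mult (mpow mult a (m-1)) b \<le> a"
proof -
  assume "m \<ge> 2"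
  then obtain k where k: "m = Suc (Suc k)" by (metis add_2_eq_Suc le_Suc_ex)
  have "mult (mpow mult a (m-1)) b \<le> mpow mult a (m-1)" by (rule le_left)
  also have "\<dots> \<le> a" using k by (simp add: le_left)
  finally show ?thesis using k by (simp add: mult_assoc)
qed

end

theorem mainTheorem5:
  fixes mult :: "'a::complete_lattice \<Rightarrow> 'a \<Rightarrow> 'a"
    and p :: "'i \<Rightarrow> 'a" and Lam :: "'i set"
  assumes "mult_lattice mult"
    and "Lam \<noteq> {}"
  shows "((\<forall>l\<in>Lam. prime_el mult (p l)) \<longrightarrow>
            (\<forall>m::nat. m \<ge> 2 \<longrightarrow> quasi_m_absorbing mult m (INF l\<in>Lam. p l)))
       \<and> ((\<forall>l\<in>Lam. weakly_prime_el mult (p l)) \<longrightarrow>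
            (\<forall>m::nat. m \<ge> 2 \<longrightarrow> weakly_quasi_m_absorbing mult m (INF l\<in>Lam. p l)))"
proof -
  interpret mult_lattice mult by fact
  obtain l0 where l0: "l0 \<in> Lam" using assms(2) by blast
  have lt: "(INF l\<in>Lam. p l) < top" if "p l0 < top"
    using that l0 by (meson INF_lower le_less_trans)
  show ?thesis
  proof (intro conjI impI allI)
    fix m :: nat assume P: "\<forall>l\<in>Lam. prime_el mult (p l)" and m: "m \<ge> 2"
    show "quasi_m_absorbing mult m (INF l\<in>Lam. p l)"
      unfolding quasi_m_absorbing_def
    proof (intro conjI allI impI)
      show "(INF l\<in>Lam. p l) < top" using lt P l0 prime_el_def by blast
      fix a b assume h: "mult (mpow mult a m) b \<le> (INF l\<in>Lam. p l)"
      have "mult (mpow mult a (m-1)) b \<le> p l" if "l \<in> Lam" for l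
      proof -
        have "mult a (mult (mpow mult a (m-1)) b) \<le> p l"
          using h key[OF m, of a b] that by (metis INF_lower order_trans)
        thus ?thesis using P that key[OF m, of a b] unfolding prime_el_def
          by (meson order_trans)
      qed
      thus "mpow mult a m \<le> (INF l\<in>Lam. p l) \<or> mult (mpow mult a (m - 1)) b \<le> (INF l\<in>Lam. p l)"
        by (simp add: le_INF_iff)
    qed
  next
    fix m :: nat assume P: "\<forall>l\<in>Lam. weakly_prime_el mult (p l)" and m: "m \<ge> 2"
    show "weakly_quasi_m_absorbing mult m (INF l\<in>Lam. p l)"
      unfolding weakly_quasi_m_absorbing_def
    proof (intro conjI allI impI)
      show "(INF l\<in>Lam. p l) < top" using lt P l0 weakly_prime_el_def by blast
      fix a b assume nz: "mult (mpow mult a m) b \<noteq> bot"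
        and h: "mult (mpow mult a m) b \<le> (INF l\<in>Lam. p l)"
      have "mult (mpow mult a (m-1)) b \<le> p l" if "l \<in> Lam" for l
      proof -
        have "mult a (mult (mpow mult a (m-1)) b) \<le> p l"
          using h key[OF m, of a b] that by (metis INF_lower order_trans)
        moreover have "mult a (mult (mpow mult a (m-1)) b) \<noteq> bot"
          using nz key[OF m, of a b] by simp
        ultimately show ?thesis using P that key[OF m, of a b] unfolding weakly_prime_el_def
          by (meson order_trans)
      qed
      thus "mpow mult a m \<le> (INF l\<in>Lam. p l) \<or> mult (mpow mult a (m - 1)) b \<le> (INF l\<in>Lam. p l)"
        by (simp add: le_INF_iff)
    qed
  qed
qed

end
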